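(* Let $\mathcal{X}$ be a finite alphabet and let $P_0,P_1$ be probability mass functions on $\mathcal{X}$ with the same support $\mathcal{X}$. Let $n>1$, let $k^\star\in(1,n]$ be an integer, and let $\mathcal{D}=(x_1,\dots,x_n)$ be a random dataset with independent entries such that $x_1,\dots,x_{k^\star-1}\sim P_0$ and $x_{k^\star},\dots,x_n\sim P_1$. Consider the estimator $$\hat k\in\arg\max_{k\in[n]} l(\mathcal{D},k),\qquad l(\mathcal{D},k)=\sum_{i=k}^{n}\log\frac{P_1(x_i)}{P_0(x_i)}.$$ Let $s=D^{J}_{\infty}(P_0,P_1)=\max_{x\in\mathcal{X}}\log\frac{P_1(x)}{P_0(x)}-\min_{x\in\mathcal{X}}\log\frac{P_1(x)}{P_0(x)}$ and $C=\min\{D_{\mathrm{KL}}(P_0\|P_1),D_{\mathrm{KL}}(P_1\|P_0)\}$. Then for every $\alpha\in[n]$, the estimator is $(\alpha,\beta)$-accurate with $$\beta\le 2\min\Bigg\{\sum_{i=1}^{i^*}\exp\Big(\frac{-2^{i-1}\alpha C^2}{s^2}\Big);\ \exp\big(-\alpha I_{ch}(P_0,P_1)\big)\Bigg\},$$ where $i^*=\lceil\log_2\big(\frac{n-1}{\alpha}\big)\rceil$; that is, $\mathbb{P}\{\hat k\notin[k^\star-\alpha,k^\star+\alpha]\}$ is at most the right-hand side.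
   Context: $[a]=\{1,\dots,a\}$. All logarithms are natural. An estimator $\hat k$ of the change-point $k^\star$ is $(\alpha,\beta)$-accurate if $\mathbb{P}\{\hat k\notin[k^\star-\alpha,k^\star+\alpha]\}=\beta$. Chernoff information: $I_{ch}(P_0,P_1)=-\min_{\lambda\in(0,1)}\log\big(\sum_{x}P_0(x)^\lambda P_1(x)^{1-\lambda}\big)$. $D_\infty(P\|Q)=\log\max_x \frac{P(x)}{Q(x)}$ and $D^J_\infty(P,Q)=D_\infty(P\|Q)+D_\infty(Q\|P)$. *)

theory Defs
  imports "HOL-Probability.Probability"
begin

definition llr :: "'a pmf \<Rightarrow> 'a pmf \<Rightarrow> 'a \<Rightarrow> real" where
  "llr P0 P1 x = ln (pmf P1 x / pmf P0 x)"

definition loglik :: "'a pmf \<Rightarrow> 'a pmf \<Rightarrow> nat \<Rightarrow> (nat \<Rightarrow> 'a) \<Rightarrow> nat \<Rightarrow> real" where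
  "loglik P0 P1 n D k = (\<Sum>i=k..n. llr P0 P1 (D i))"

definition dataset :: "'a pmf \<Rightarrow> 'a pmf \<Rightarrow> nat \<Rightarrow> nat \<Rightarrow> (nat \<Rightarrow> 'a) pmf" where
  "dataset P0 P1 n kstar = Pi_pmf {1..n} undefined (\<lambda>i. if i < kstar then P0 else P1)"

definition KL :: "'a::finite pmf \<Rightarrow> 'a pmf \<Rightarrow> real" where
  "KL P Q = (\<Sum>x\<in>UNIV. pmf P x * ln (pmf P x / pmf Q x))"

definition Dinf :: "'a::finite pmf \<Rightarrow> 'a pmf \<Rightarrow> real" where
  "Dinf P Q = ln (Max ((\<lambda>x. pmf P x / pmf Q x) ` UNIV))"

definition DinfJ :: "'a::finite pmf \<Rightarrow> 'a pmf \<Rightarrow> real" where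
  "DinfJ P Q = Dinf P Q + Dinf Q P"

definition chernoff_info :: "'a::finite pmf \<Rightarrow> 'a pmf \<Rightarrow> real" where
  "chernoff_info P0 P1 =
     - (INF t\<in>{0<..<1::real}. ln (\<Sum>x\<in>UNIV. pmf P0 x powr t * pmf P1 x powr (1 - t)))"

end

theory Submission
  imports Defs
begin
lemma measure_bind_finite:
  fixes M :: "'a::finite pmf"
  shows "measure_pmf.prob (bind_pmf M N) X = (\<Sum>y\<in>UNIV. pmf M y * measure_pmf.prob (N y) X)"
proof -
  have "emeasure (measure_pmf (bind_pmf M N)) X = (\<integral>\<^sup>+y. emeasure (N y) X \<partial>M)" by simp
  also have "\<dots> = (\<Sum>y\<in>UNIV. ennreal (pmf M y * measure_pmf.prob (N y) X))"
    apply (simp add: nn_integral_measure_pmf_finite measure_pmf.emeasure_eq_measure ennreal_mult' mult.commute)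
    by (rule sum.mono_neutral_left) (auto simp: set_pmf_eq)
  also have "\<dots> = ennreal (\<Sum>y\<in>UNIV. pmf M y * measure_pmf.prob (N y) X)"
    by (rule sum_ennreal) simp
  finally show ?thesis
    by (simp add: measure_pmf.emeasure_eq_measure sum_nonneg)
qed
lemma prod_list_nonneg_map:
  fixes h :: "nat \<Rightarrow> real"
  shows "(\<forall>j\<in>set xs. 0 \<le> h j) \<Longrightarrow> 0 \<le> prod_list (map h xs)"
  by (induction xs) auto

lemma ville:
  fixes p :: "nat \<Rightarrow> 'a::finite pmf" and g :: "nat \<Rightarrow> 'a \<Rightarrow> real"
  assumes "finite I" "set js \<subseteq> I" "distinct js"
    "\<forall>j\<in>set js. \<forall>x. 0 \<le> g j x"
    "\<forall>j\<in>set js. (\<Sum>x\<in>UNIV. pmf (p j) x * g j x) \<le> 1"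
    "c > 0"
  shows "measure_pmf.prob (Pi_pmf I d p)
     {D. \<exists>m\<le>length js. c \<le> prod_list (map (\<lambda>j. g j (D j)) (take m js))} \<le> 1/c"
  using assms
proof (induction js arbitrary: I c)
  case Nil
  show ?case
  proof (cases "c \<le> 1")
    case True
    have "measure_pmf.prob (Pi_pmf I d p) {D. \<exists>m\<le>length []. c \<le> prod_list (map (\<lambda>j. g j (D j)) (take m []))} \<le> 1"
      by simp
    also have "1 \<le> 1 / c" using True Nil by simp
    finally show ?thesis .
  next
    case False
    then show ?thesis using Nil by simp
  qed
next
  case (Cons j js)
  show ?case
  proof (cases "c \<le> 1")
    case True
    have "measure_pmf.prob (Pi_pmf I d p) {D. \<exists>m\<le>length (j#js). c \<le> prod_list (map (\<lambda>j. g j (D j)) (take m (j#js)))} \<le> 1"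
      by simp
    also have "1 \<le> 1 / c" using True Cons by simp
    finally show ?thesis .
  next
    case False
    define A where "A = I - {j}"
    have IA: "I = insert j A" "j \<notin> A" "finite A" using Cons.prems A_def by auto
    let ?E = "\<lambda>js c. {D. \<exists>m\<le>length js. c \<le> prod_list (map (\<lambda>j. g j (D j)) (take m js))}"
    have step: "measure_pmf.prob (Pi_pmf A d p) ((\<lambda>f. f(j:=y)) -` ?E (j#js) c) \<le> g j y / c" for y
    proof (cases "g j y > 0")
      case True
      have "(\<lambda>f. f(j:=y)) -` ?E (j#js) c \<subseteq> ?E js (c / g j y)"
      proof
        fix f assume "f \<in> (\<lambda>f. f(j:=y)) -` ?E (j#js) c"
        then obtain m where m: "m \<le> Suc (length js)"
          "c \<le> prod_list (map (\<lambda>i. g i ((f(j:=y)) i)) (take m (j#js)))" by auto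
        then obtain m' where m': "m = Suc m'" using False by (cases m) auto
        have eq: "map (\<lambda>i. g i ((f(j:=y)) i)) (take m' js) = map (\<lambda>i. g i (f i)) (take m' js)"
          using Cons.prems(3) by (auto dest: in_set_takeD)
        have "prod_list (map (\<lambda>i. g i ((f(j:=y)) i)) (take m (j#js))) = g j y * prod_list (map (\<lambda>i. g i (f i)) (take m' js))"
          by (simp only: m' take_Suc_Cons list.map prod_list.Cons fun_upd_same eq)
        then have "c \<le> g j y * prod_list (map (\<lambda>i. g i (f i)) (take m' js))"
          using m by simp
        then have "c / g j y \<le> prod_list (map (\<lambda>i. g i (f i)) (take m' js))"
          using True by (simp add: divide_le_eq mult.commute)
        then show "f \<in> ?E js (c / g j y)" using m m' by auto
      qed
      then have "measure_pmf.prob (Pi_pmf A d p) ((\<lambda>f. f(j:=y)) -` ?E (j#js) c)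
           \<le> measure_pmf.prob (Pi_pmf A d p) (?E js (c / g j y))"
        by (intro measure_pmf.finite_measure_mono) auto
      also have "\<dots> \<le> 1 / (c / g j y)"
        using Cons.prems True IA by (intro Cons.IH) auto
      finally show ?thesis by simp
    next
      case False
      then have g0: "g j y = 0" using Cons.prems(4) by (simp add: not_less order.antisym)
      have emp: "(\<lambda>f. f(j:=y)) -` ?E (j#js) c = {}"
      proof (rule ccontr)
        assume "(\<lambda>f. f(j:=y)) -` ?E (j#js) c \<noteq> {}"
        then obtain f where "f \<in> (\<lambda>f. f(j:=y)) -` ?E (j#js) c" by blast
        then obtain m where m: "m \<le> Suc (length js)"
          "c \<le> prod_list (map (\<lambda>i. g i ((f(j:=y)) i)) (take m (j#js)))" by auto
        then show False using \<open>\<not> c \<le> 1\<close> g0 by (cases m) auto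
      qed
      show ?thesis by (simp only: emp measure_empty) (simp add: g0)
    qed
    have "measure_pmf.prob (Pi_pmf I d p) (?E (j#js) c)
       = (\<Sum>y\<in>UNIV. pmf (p j) y * measure_pmf.prob (Pi_pmf A d p) ((\<lambda>f. f(j:=y)) -` ?E (j#js) c))"
      unfolding IA(1) using IA
      by (subst Pi_pmf_insert') (simp_all add: measure_bind_finite bind_return_pmf' map_pmf_def[symmetric])
    also have "\<dots> \<le> (\<Sum>y\<in>UNIV. pmf (p j) y * (g j y / c))"
      by (intro sum_mono mult_left_mono step) auto
    also have "\<dots> = (\<Sum>y\<in>UNIV. pmf (p j) y * g j y) / c"
      by (simp add: sum_divide_distrib)
    also have "\<dots> \<le> 1 / c"
      using Cons.prems by (intro divide_right_mono) auto
    finally show ?thesis .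
  qed
qed

lemma prod_list_exp_div:
  fixes h :: "nat \<Rightarrow> real"
  assumes "\<rho> > 0"
  shows "prod_list (map (\<lambda>j. exp (h j) / \<rho>) xs) = exp (sum_list (map h xs) - real (length xs) * ln \<rho>)"
  using assms
proof (induction xs)
  case Nil then show ?case by simp
next
  case (Cons a xs)
  have "exp (h a + sum_list (map h xs) - (1 + real (length xs)) * ln \<rho>)
      = exp (h a) / exp (ln \<rho>) * exp (sum_list (map h xs) - real (length xs) * ln \<rho>)"
    by (simp add: exp_diff exp_add algebra_simps)
  then show ?case using Cons by simp
qed

lemma walk_bound:
  fixes p :: "nat \<Rightarrow> 'a::finite pmf" and h :: "'a \<Rightarrow> real"
  assumes "finite I" "set js \<subseteq> I" "distinct js" "\<forall>j\<in>set js. p j = Q"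
    "\<rho> > 0" "(\<Sum>x\<in>UNIV. pmf Q x * exp (h x)) \<le> \<rho>"
  shows "measure_pmf.prob (Pi_pmf I d p)
     {D. \<exists>m\<le>length js. c \<le> sum_list (map (\<lambda>j. h (D j)) (take m js)) - real m * ln \<rho>} \<le> exp (- c)"
proof -
  define g where "g = (\<lambda>(j::nat) x. exp (h x) / \<rho>)"
  have "{D. \<exists>m\<le>length js. c \<le> sum_list (map (\<lambda>j. h (D j)) (take m js)) - real m * ln \<rho>}
     = {D. \<exists>m\<le>length js. exp c \<le> prod_list (map (\<lambda>j. g j (D j)) (take m js))}"
  proof -
    have "prod_list (map (\<lambda>j. g j (D j)) (take m js)) = exp (sum_list (map (\<lambda>j. h (D j)) (take m js)) - real m * ln \<rho>)"
      if "m \<le> length js" for D m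
      using prod_list_exp_div[OF assms(5), of "\<lambda>j. h (D j)" "take m js"] that
      by (simp add: g_def min_def)
    then show ?thesis by (auto intro!: Collect_cong ex_cong)
  qed
  also have "measure_pmf.prob (Pi_pmf I d p) \<dots> \<le> 1 / exp c"
  proof (rule ville)
    show "\<forall>j\<in>set js. \<forall>x. 0 \<le> g j x" using assms by (simp add: g_def)
    have "(\<Sum>x\<in>UNIV. pmf Q x * g j x) = (\<Sum>x\<in>UNIV. pmf Q x * exp (h x)) / \<rho>" for j
      by (simp add: g_def sum_divide_distrib)
    then show "\<forall>j\<in>set js. (\<Sum>x\<in>UNIV. pmf (p j) x * g j x) \<le> 1"
      using assms by simp
  qed (use assms in auto)
  finally show ?thesis by (simp add: exp_minus field_simps)
qed

lemma expectation_finite: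
  fixes Q :: "'a::finite pmf"
  shows "measure_pmf.expectation Q X = (\<Sum>y\<in>UNIV. pmf Q y * X y)"
  by (subst integral_measure_pmf_real[where A=UNIV]) (auto simp: mult.commute)

lemma hoeffding_pmf:
  fixes Q :: "'a::finite pmf" and X :: "'a \<Rightarrow> real"
  assumes "set_pmf Q = UNIV" "\<forall>x. X x \<in> {a..b}" "l > 0"
  shows "(\<Sum>x\<in>UNIV. pmf Q x * exp (l * (X x - (\<Sum>y\<in>UNIV. pmf Q y * X y)))) \<le> exp (l\<^sup>2 * (b-a)\<^sup>2 / 8)"
proof -
  interpret interval_bounded_random_variable "measure_pmf Q" X a b
    by unfold_locales (use assms in auto)
  have H: "nn_integral (measure_pmf Q) (\<lambda>x. exp (l * (X x - measure_pmf.expectation Q X))) \<le> ennreal (exp (l\<^sup>2 * (b - a)\<^sup>2 / 8))"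
    by (rule Hoeffdings_lemma_nn_integral) (use assms in auto)
  have "nn_integral (measure_pmf Q) (\<lambda>x. exp (l * (X x - measure_pmf.expectation Q X)))
     = (\<Sum>x\<in>UNIV. ennreal (pmf Q x * exp (l * (X x - (\<Sum>y\<in>UNIV. pmf Q y * X y)))))"
    using assms(1) by (simp add: nn_integral_measure_pmf_finite expectation_finite ennreal_mult' mult.commute)
  also have "\<dots> = ennreal (\<Sum>x\<in>UNIV. pmf Q x * exp (l * (X x - (\<Sum>y\<in>UNIV. pmf Q y * X y))))"
    by (rule sum_ennreal) simp
  finally show ?thesis using H by (simp add: ennreal_le_iff)
qed

lemma sum_pmf_UNIV: "(\<Sum>x\<in>UNIV. pmf (P::'a::finite pmf) x) = 1"
  by (rule sum_pmf_eq_1) auto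

lemma KL_nonneg:
  fixes P Q :: "'a::finite pmf"
  assumes "set_pmf P = UNIV" "set_pmf Q = UNIV"
  shows "0 \<le> KL P Q"
proof -
  have pos: "pmf P x > 0" "pmf Q x > 0" for x
    using assms by (auto simp: pmf_positive_iff)
  have "pmf P x * ln (pmf Q x / pmf P x) \<le> pmf Q x - pmf P x" for x
  proof -
    have "ln (pmf Q x / pmf P x) \<le> pmf Q x / pmf P x - 1"
      using pos[of x] by (intro ln_le_minus_one) auto
    then have "pmf P x * ln (pmf Q x / pmf P x) \<le> pmf P x * (pmf Q x / pmf P x - 1)"
      using pos[of x] by (intro mult_left_mono) auto
    moreover have "pmf P x * (pmf Q x / pmf P x - 1) = pmf Q x - pmf P x"
      using pos[of x] by (simp add: field_simps)
    ultimately show ?thesis by linarith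
  qed
  then have "(\<Sum>x\<in>UNIV. pmf P x * ln (pmf Q x / pmf P x)) \<le> (\<Sum>x\<in>UNIV. pmf Q x - pmf P x)"
    by (intro sum_mono) auto
  also have "\<dots> = 0" by (simp add: sum_subtractf sum_pmf_UNIV)
  finally have "(\<Sum>x\<in>UNIV. pmf P x * ln (pmf Q x / pmf P x)) \<le> 0" .
  moreover have "pmf P x * ln (pmf Q x / pmf P x) = - (pmf P x * ln (pmf P x / pmf Q x))" for x
    using pos[of x] by (simp add: ln_div algebra_simps)
  then have "(\<Sum>x\<in>UNIV. pmf P x * ln (pmf Q x / pmf P x)) = - KL P Q"
    unfolding KL_def by (simp add: sum_negf)
  ultimately show ?thesis by simp
qed

definition rho :: "'a::finite pmf \<Rightarrow> 'a pmf \<Rightarrow> real \<Rightarrow> real" where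
  "rho P0 P1 t = (\<Sum>x\<in>UNIV. pmf P0 x powr t * pmf P1 x powr (1 - t))"

lemma rho_pos_le1:
  fixes P0 P1 :: "'a::finite pmf"
  assumes "set_pmf P0 = UNIV" "set_pmf P1 = UNIV" "0 < t" "t < 1"
  shows "0 < rho P0 P1 t" "rho P0 P1 t \<le> 1"
proof -
  have pos: "pmf P0 x > 0" "pmf P1 x > 0" for x
    using assms by (auto simp: pmf_positive_iff)
  show "0 < rho P0 P1 t" unfolding rho_def
    using pos by (intro sum_pos) (auto intro!: mult_pos_pos, metis less_irrefl, metis less_irrefl)
  have "rho P0 P1 t \<le> (\<Sum>x\<in>UNIV. t * pmf P0 x + (1 - t) * pmf P1 x)"
    unfolding rho_def using pos assms by (intro sum_mono Youngs_inequality_0) auto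
  also have "\<dots> = 1"
    by (simp add: sum.distrib sum_distrib_left[symmetric] sum_pmf_UNIV)
  finally show "rho P0 P1 t \<le> 1" .
qed

lemma llr_bounds:
  fixes P0 P1 :: "'a::finite pmf"
  assumes "set_pmf P0 = UNIV" "set_pmf P1 = UNIV"
  shows "llr P0 P1 x \<in> {- Dinf P0 P1 .. Dinf P1 P0}"
proof -
  have pos: "pmf P0 x > 0" "pmf P1 x > 0" for x
    using assms by (auto simp: pmf_positive_iff)
  have m1: "pmf P1 x / pmf P0 x \<le> Max ((\<lambda>x. pmf P1 x / pmf P0 x) ` UNIV)"
    by (rule Max_ge) auto
  have m2: "pmf P0 x / pmf P1 x \<le> Max ((\<lambda>x. pmf P0 x / pmf P1 x) ` UNIV)"
    by (rule Max_ge) auto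
  have p1: "pmf P1 x / pmf P0 x > 0" "pmf P0 x / pmf P1 x > 0" using pos[of x] by auto
  have "ln (pmf P1 x / pmf P0 x) \<le> ln (Max ((\<lambda>x. pmf P1 x / pmf P0 x) ` UNIV))"
    using m1 p1 by (metis ln_le_cancel_iff less_le_trans)
  moreover have "ln (pmf P0 x / pmf P1 x) \<le> ln (Max ((\<lambda>x. pmf P0 x / pmf P1 x) ` UNIV))"
    using m2 p1 by (metis ln_le_cancel_iff less_le_trans)
  moreover have "ln (pmf P0 x / pmf P1 x) = - ln (pmf P1 x / pmf P0 x)"
    using pos[of x] by (simp add: ln_div)
  ultimately show ?thesis by (auto simp: llr_def Dinf_def)
qed

lemma llr_neg_bound:
  fixes P0 P1 :: "'a::finite pmf"
  assumes "set_pmf P0 = UNIV" "set_pmf P1 = UNIV"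
  shows "- llr P0 P1 x \<in> {- Dinf P1 P0 .. Dinf P0 P1}"
  using llr_bounds[OF assms, of x] by auto

lemma exp_P1:
  fixes P0 P1 :: "'a::finite pmf"
  assumes "set_pmf P0 = UNIV" "set_pmf P1 = UNIV"
  shows "(\<Sum>x\<in>UNIV. pmf P1 x * exp (- t * llr P0 P1 x)) = rho P0 P1 t"
    "(\<Sum>x\<in>UNIV. pmf P0 x * exp ((1 - t) * llr P0 P1 x)) = rho P0 P1 t"
proof -
  have pos: "pmf P0 x > 0" "pmf P1 x > 0" for x
    using assms by (auto simp: pmf_positive_iff)
  have "pmf P1 x * exp (- t * llr P0 P1 x) = pmf P0 x powr t * pmf P1 x powr (1 - t)" for x
  proof -
    have "pmf P1 x * exp (- t * llr P0 P1 x) = exp (ln (pmf P1 x)) * exp (- t * (ln (pmf P1 x) - ln (pmf P0 x)))"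
      using pos[of x] by (simp add: llr_def ln_div)
    also have "\<dots> = exp (t * ln (pmf P0 x)) * exp ((1 - t) * ln (pmf P1 x))"
      by (simp add: exp_add[symmetric] algebra_simps)
    finally show ?thesis using pos[of x] by (simp add: powr_def)
  qed
  then show "(\<Sum>x\<in>UNIV. pmf P1 x * exp (- t * llr P0 P1 x)) = rho P0 P1 t"
    by (simp add: rho_def)
  have "pmf P0 x * exp ((1 - t) * llr P0 P1 x) = pmf P0 x powr t * pmf P1 x powr (1 - t)" for x
  proof -
    have "pmf P0 x * exp ((1 - t) * llr P0 P1 x) = exp (ln (pmf P0 x)) * exp ((1 - t) * (ln (pmf P1 x) - ln (pmf P0 x)))"
      using pos[of x] by (simp add: llr_def ln_div)
    also have "\<dots> = exp (t * ln (pmf P0 x)) * exp ((1 - t) * ln (pmf P1 x))"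
      by (simp add: exp_add[symmetric] algebra_simps)
    finally show ?thesis using pos[of x] by (simp add: powr_def)
  qed
  then show "(\<Sum>x\<in>UNIV. pmf P0 x * exp ((1 - t) * llr P0 P1 x)) = rho P0 P1 t"
    by (simp add: rho_def)
qed

lemma mean_llr:
  fixes P0 P1 :: "'a::finite pmf"
  assumes "set_pmf P0 = UNIV" "set_pmf P1 = UNIV"
  shows "(\<Sum>x\<in>UNIV. pmf P1 x * llr P0 P1 x) = KL P1 P0"
    "(\<Sum>x\<in>UNIV. pmf P0 x * llr P0 P1 x) = - KL P0 P1"
proof -
  have pos: "pmf P0 x > 0" "pmf P1 x > 0" for x
    using assms by (auto simp: pmf_positive_iff)
  show "(\<Sum>x\<in>UNIV. pmf P1 x * llr P0 P1 x) = KL P1 P0" by (simp add: KL_def llr_def)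
  have "pmf P0 x * llr P0 P1 x = - (pmf P0 x * ln (pmf P0 x / pmf P1 x))" for x
    using pos[of x] by (simp add: llr_def ln_div algebra_simps)
  then show "(\<Sum>x\<in>UNIV. pmf P0 x * llr P0 P1 x) = - KL P0 P1"
    by (simp add: KL_def sum_negf)
qed

lemma sum_list_lin:
  fixes X :: "nat \<Rightarrow> real"
  shows "sum_list (map (\<lambda>j. a * (X j + b)) xs) = a * sum_list (map X xs) + real (length xs) * a * b"
  by (induction xs) (auto simp: algebra_simps)

lemma chernoff_walk:
  fixes p :: "nat \<Rightarrow> 'a::finite pmf" and X :: "'a \<Rightarrow> real"
  assumes "finite I" "set js \<subseteq> I" "distinct js" "\<forall>j\<in>set js. p j = Q"
    "0 < \<rho>" "\<rho> \<le> 1" "0 \<le> t" "(\<Sum>x\<in>UNIV. pmf Q x * exp (t * X x)) \<le> \<rho>"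
  shows "measure_pmf.prob (Pi_pmf I d p)
     {D. \<exists>m\<le>length js. real \<alpha> \<le> real m \<and> 0 \<le> sum_list (map (\<lambda>j. X (D j)) (take m js))}
     \<le> exp (real \<alpha> * ln \<rho>)"
proof -
  have "{D. \<exists>m\<le>length js. real \<alpha> \<le> real m \<and> 0 \<le> sum_list (map (\<lambda>j. X (D j)) (take m js))}
     \<subseteq> {D. \<exists>m\<le>length js. - (real \<alpha> * ln \<rho>) \<le> sum_list (map (\<lambda>j. t * X (D j)) (take m js)) - real m * ln \<rho>}"
  proof safe
    fix D m assume m: "m \<le> length js" "real \<alpha> \<le> real m" "0 \<le> sum_list (map (\<lambda>j. X (D j)) (take m js))"
    have "sum_list (map (\<lambda>j. t * X (D j)) (take m js)) = t * sum_list (map (\<lambda>j. X (D j)) (take m js))"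
      using sum_list_lin[of t "\<lambda>j. X (D j)" 0 "take m js"] by simp
    then have "0 \<le> sum_list (map (\<lambda>j. t * X (D j)) (take m js))"
      using m assms by simp
    moreover have "real m * ln \<rho> \<le> real \<alpha> * ln \<rho>"
      using m assms by (intro mult_right_mono_neg) auto
    ultimately show "\<exists>m\<le>length js. - (real \<alpha> * ln \<rho>) \<le> sum_list (map (\<lambda>j. t * X (D j)) (take m js)) - real m * ln \<rho>"
      using m by (intro exI[of _ m]) auto
  qed
  then have "measure_pmf.prob (Pi_pmf I d p)
     {D. \<exists>m\<le>length js. real \<alpha> \<le> real m \<and> 0 \<le> sum_list (map (\<lambda>j. X (D j)) (take m js))}
    \<le> measure_pmf.prob (Pi_pmf I d p) {D. \<exists>m\<le>length js. - (real \<alpha> * ln \<rho>) \<le> sum_list (map (\<lambda>j. t * X (D j)) (take m js)) - real m * ln \<rho>}"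
    by (intro measure_pmf.finite_measure_mono) auto
  also have "\<dots> \<le> exp (- (- (real \<alpha> * ln \<rho>)))"
    by (rule walk_bound[where Q=Q]) (use assms in auto)
  finally show ?thesis by simp
qed

lemma hoeff_walk:
  fixes p :: "nat \<Rightarrow> 'a::finite pmf" and X :: "'a \<Rightarrow> real"
  assumes "finite I" "set js \<subseteq> I" "distinct js" "\<forall>j\<in>set js. p j = Q"
    "set_pmf Q = UNIV" "\<forall>x. X x \<in> {a..b}" "b - a = s" "s \<noteq> 0" "\<mu> > 0"
    "(\<Sum>x\<in>UNIV. pmf Q x * X x) = - \<mu>"
  shows "measure_pmf.prob (Pi_pmf I d p)
     {D. \<exists>m\<le>length js. real \<alpha> \<le> real m \<and> 0 \<le> sum_list (map (\<lambda>j. X (D j)) (take m js))}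
     \<le> exp (- (real \<alpha> * \<mu>\<^sup>2 / s\<^sup>2))"
proof -
  define \<theta> where "\<theta> = 4 * \<mu> / s\<^sup>2"
  define q where "q = \<mu>\<^sup>2 / s\<^sup>2"
  have s2: "s\<^sup>2 > 0" using assms by simp
  have th: "\<theta> > 0" using assms s2 by (simp add: \<theta>_def)
  have q0: "q \<ge> 0" by (simp add: q_def)
  have e1: "\<theta> * \<mu> = 4 * q" by (simp add: \<theta>_def q_def power2_eq_square)
  have e2: "\<theta>\<^sup>2 * s\<^sup>2 / 8 = 2 * q" using assms by (simp add: \<theta>_def q_def power2_eq_square field_simps)
  define \<rho> where "\<rho> = exp (\<theta>\<^sup>2 * s\<^sup>2 / 8)"
  have lr: "ln \<rho> = 2 * q" by (simp add: \<rho>_def e2)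
  have H: "(\<Sum>x\<in>UNIV. pmf Q x * exp (\<theta> * (X x - (\<Sum>y\<in>UNIV. pmf Q y * X y)))) \<le> exp (\<theta>\<^sup>2 * (b-a)\<^sup>2 / 8)"
    by (rule hoeffding_pmf) (use assms th in auto)
  have H': "(\<Sum>x\<in>UNIV. pmf Q x * exp (\<theta> * (X x + \<mu>))) \<le> \<rho>"
    using H assms by (simp add: \<rho>_def)
  have "{D. \<exists>m\<le>length js. real \<alpha> \<le> real m \<and> 0 \<le> sum_list (map (\<lambda>j. X (D j)) (take m js))}
     \<subseteq> {D. \<exists>m\<le>length js. real \<alpha> * q \<le> sum_list (map (\<lambda>j. \<theta> * (X (D j) + \<mu>)) (take m js)) - real m * ln \<rho>}"
  proof safe
    fix D m assume m: "m \<le> length js" "real \<alpha> \<le> real m" "0 \<le> sum_list (map (\<lambda>j. X (D j)) (take m js))"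
    have "sum_list (map (\<lambda>j. \<theta> * (X (D j) + \<mu>)) (take m js)) = \<theta> * sum_list (map (\<lambda>j. X (D j)) (take m js)) + real m * (\<theta> * \<mu>)"
      using sum_list_lin[of \<theta> "\<lambda>j. X (D j)" \<mu> "take m js"] m by (simp add: min_def)
    moreover have "0 \<le> \<theta> * sum_list (map (\<lambda>j. X (D j)) (take m js))"
      using m th by simp
    moreover have "real \<alpha> * q \<le> real m * q" using m q0 by (intro mult_right_mono) auto
    moreover have "0 \<le> real m * q" using q0 by simp
    ultimately have "real \<alpha> * q \<le> sum_list (map (\<lambda>j. \<theta> * (X (D j) + \<mu>)) (take m js)) - real m * ln \<rho>"
      unfolding lr e1 by (simp add: algebra_simps)
    then show "\<exists>m\<le>length js. real \<alpha> * q \<le> sum_list (map (\<lambda>j. \<theta> * (X (D j) + \<mu>)) (take m js)) - real m * ln \<rho>"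
      using m by (intro exI[of _ m]) auto
  qed
  then have "measure_pmf.prob (Pi_pmf I d p)
     {D. \<exists>m\<le>length js. real \<alpha> \<le> real m \<and> 0 \<le> sum_list (map (\<lambda>j. X (D j)) (take m js))}
    \<le> measure_pmf.prob (Pi_pmf I d p) {D. \<exists>m\<le>length js. real \<alpha> * q \<le> sum_list (map (\<lambda>j. \<theta> * (X (D j) + \<mu>)) (take m js)) - real m * ln \<rho>}"
    by (intro measure_pmf.finite_measure_mono) auto
  also have "\<dots> \<le> exp (- (real \<alpha> * q))"
    by (rule walk_bound[where Q=Q and h="\<lambda>x. \<theta> * (X x + \<mu>)"]) (use assms H' in \<open>auto simp: \<rho>_def\<close>)
  finally show ?thesis by (simp add: q_def)
qed

lemma sum_take_upt:
  "a \<le> b \<Longrightarrow> m \<le> b - a \<Longrightarrow> sum_list (map f (take m [a..<b])) = sum f {a..<a+m}"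
  by (subst take_upt) (auto simp: interv_sum_list_conv_sum_set_nat)

lemma sum_take_rev_upt:
  fixes f :: "nat \<Rightarrow> 'b::comm_monoid_add"
  assumes "a \<le> b" "m \<le> b - a"
  shows "sum_list (map f (take m (rev [a..<b]))) = sum f {b-m..<b}"
proof -
  have "a + (b - (a + m)) = b - m" using assms by arith
  then show ?thesis
    by (simp add: take_rev rev_map[symmetric] sum_list_rev interv_sum_list_conv_sum_set_nat)
qed

lemma sum_split_le:
  "a \<le> b \<Longrightarrow> b \<le> Suc c \<Longrightarrow> (\<Sum>i=a..c. f i) = (\<Sum>i=a..<b. f i) + (\<Sum>i=b..c. (f i :: real))"
  by (metis atLeastLessThanSuc_atLeastAtMost sum.atLeastLessThan_concat)

lemma inf_bound:
  fixes P0 P1 :: "'a::finite pmf"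
  assumes "\<forall>t\<in>{0<..<1::real}. P \<le> exp (real \<alpha> * ln (rho P0 P1 t))" "0 \<le> P" "1 \<le> \<alpha>"
  shows "P \<le> exp (- real \<alpha> * chernoff_info P0 P1)"
proof (cases "P = 0")
  case True then show ?thesis by simp
next
  case False
  then have Pp: "P > 0" using assms by simp
  have "ln P / real \<alpha> \<le> (INF t\<in>{0<..<1::real}. ln (rho P0 P1 t))"
  proof (rule cINF_greatest)
    fix t :: real assume t: "t \<in> {0<..<1}"
    have "ln P \<le> ln (exp (real \<alpha> * ln (rho P0 P1 t)))"
      using assms(1) t Pp by (subst ln_le_cancel_iff) auto
    then show "ln P / real \<alpha> \<le> ln (rho P0 P1 t)"
      using assms(3) by (simp add: divide_le_eq mult.commute)
  qed auto
  then have "ln P \<le> real \<alpha> * (INF t\<in>{0<..<1::real}. ln (rho P0 P1 t))"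
    using assms(3) by (simp add: divide_le_eq mult.commute)
  then have "exp (ln P) \<le> exp (real \<alpha> * (INF t\<in>{0<..<1::real}. ln (rho P0 P1 t)))"
    by simp
  then show ?thesis using Pp by (simp add: chernoff_info_def rho_def)
qed

theorem theorem3p1:
  fixes P0 P1 :: "'a::finite pmf"
    and n kstar \<alpha> :: nat
    and khat :: "(nat \<Rightarrow> 'a) \<Rightarrow> nat"
  assumes supp0: "set_pmf P0 = UNIV" and supp1: "set_pmf P1 = UNIV"
    and n_gt: "n > 1"
    and kstar: "1 < kstar" "kstar \<le> n"
    and alpha: "1 \<le> \<alpha>" "\<alpha> \<le> n"
    and khat_range: "\<And>D. khat D \<in> {1..n}"
    and khat_argmax: "\<And>D k. k \<in> {1..n} \<Longrightarrow> loglik P0 P1 n D k \<le> loglik P0 P1 n D (khat D)"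
  shows "measure_pmf.prob (dataset P0 P1 n kstar)
           {D. int (khat D) \<notin> {int kstar - int \<alpha> .. int kstar + int \<alpha>}}
         \<le> 2 * min
             (\<Sum>i=1..nat \<lceil>log 2 ((real n - 1) / real \<alpha>)\<rceil>.
                exp (- (2 ^ (i - 1) * real \<alpha> * (min (KL P0 P1) (KL P1 P0))\<^sup>2)
                      / (DinfJ P0 P1)\<^sup>2))
             (exp (- real \<alpha> * chernoff_info P0 P1))"
proof -
  define p where "p = (\<lambda>i::nat. if i < kstar then P0 else P1)"
  define M where "M = dataset P0 P1 n kstar"
  have M: "M = Pi_pmf {1..n} undefined p" by (simp add: M_def dataset_def p_def)
  define E where "E = {D. int (khat D) \<notin> {int kstar - int \<alpha> .. int kstar + int \<alpha>}}"
  define C where "C = min (KL P0 P1) (KL P1 P0)"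
  define s where "s = DinfJ P0 P1"
  define Sm where "Sm = (\<Sum>i=1..nat \<lceil>log 2 ((real n - 1) / real \<alpha>)\<rceil>. exp (- (2 ^ (i - 1) * real \<alpha> * C\<^sup>2) / s\<^sup>2))"
  define Ch where "Ch = exp (- real \<alpha> * chernoff_info P0 P1)"
  define jR where "jR = [kstar..<Suc n]"
  define jL where "jL = rev [1..<kstar]"
  define R where "R = {D. \<exists>m\<le>length jR. real \<alpha> \<le> real m \<and> 0 \<le> sum_list (map (\<lambda>j. - llr P0 P1 (D j)) (take m jR))}"
  define L where "L = {D. \<exists>m\<le>length jL. real \<alpha> \<le> real m \<and> 0 \<le> sum_list (map (\<lambda>j. llr P0 P1 (D j)) (take m jL))}"
  have Sm_nn: "0 \<le> Sm" unfolding Sm_def by (intro sum_nonneg) auto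
  have Ch_nn: "0 \<le> Ch" unfolding Ch_def by simp
  show ?thesis
  proof (cases "real n - 1 \<le> real \<alpha>")
    case True
    have "E = {}"
    proof safe
      fix D assume "D \<in> E"
      moreover have "khat D \<in> {1..n}" by (rule khat_range)
      ultimately show "D \<in> {}" using True kstar by (auto simp: E_def)
    qed
    then have "measure_pmf.prob M E \<le> 2 * min Sm Ch" using Sm_nn Ch_nn by simp
    then show ?thesis unfolding M_def E_def Sm_def Ch_def C_def s_def .
  next
    case False
    have KLp: "0 \<le> KL P0 P1" "0 \<le> KL P1 P0" using KL_nonneg[OF supp0 supp1] KL_nonneg[OF supp1 supp0] by auto
    have C0: "0 \<le> C" using KLp by (simp add: C_def)
    have sub: "E \<subseteq> R \<union> L"
    proof
      fix D assume "D \<in> E"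
      define k where "k = khat D"
      have k: "k \<in> {1..n}" unfolding k_def by (rule khat_range)
      have opt: "loglik P0 P1 n D kstar \<le> loglik P0 P1 n D k"
        unfolding k_def using kstar by (intro khat_argmax) auto
      have "k + \<alpha> < kstar \<or> kstar + \<alpha> < k" using \<open>D \<in> E\<close> by (auto simp: E_def k_def)
      then show "D \<in> R \<union> L"
      proof
        assume kl: "kstar + \<alpha> < k"
        define m where "m = k - kstar"
        have "loglik P0 P1 n D kstar = (\<Sum>i=kstar..<k. llr P0 P1 (D i)) + loglik P0 P1 n D k"
          unfolding loglik_def using kl k by (intro sum_split_le) auto
        then have neg: "(\<Sum>i=kstar..<k. llr P0 P1 (D i)) \<le> 0" using opt by simp
        have "sum_list (map (\<lambda>j. - llr P0 P1 (D j)) (take m jR)) = (\<Sum>i=kstar..<kstar+m. - llr P0 P1 (D i))"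
          unfolding jR_def using kl k kstar by (intro sum_take_upt) (auto simp: m_def)
        also have "\<dots> = - (\<Sum>i=kstar..<k. llr P0 P1 (D i))"
          using kl by (simp add: m_def sum_negf)
        finally have "0 \<le> sum_list (map (\<lambda>j. - llr P0 P1 (D j)) (take m jR))" using neg by simp
        moreover have "m \<le> length jR" "real \<alpha> \<le> real m" using kl k by (auto simp: m_def jR_def)
        ultimately show ?thesis unfolding R_def by blast
      next
        assume kl: "k + \<alpha> < kstar"
        define m where "m = kstar - k"
        have "loglik P0 P1 n D k = (\<Sum>i=k..<kstar. llr P0 P1 (D i)) + loglik P0 P1 n D kstar"
          unfolding loglik_def using kl k kstar by (intro sum_split_le) auto
        then have pos: "0 \<le> (\<Sum>i=k..<kstar. llr P0 P1 (D i))" using opt by simp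
        have "sum_list (map (\<lambda>j. llr P0 P1 (D j)) (take m jL)) = (\<Sum>i=kstar-m..<kstar. llr P0 P1 (D i))"
          unfolding jL_def using kl k kstar by (intro sum_take_rev_upt) (auto simp: m_def)
        also have "kstar - m = k" using kl by (simp add: m_def)
        finally have "0 \<le> sum_list (map (\<lambda>j. llr P0 P1 (D j)) (take m jL))" using pos by simp
        moreover have "m \<le> length jL" "real \<alpha> \<le> real m" using kl k by (auto simp: m_def jL_def)
        ultimately show ?thesis unfolding L_def by blast
      qed
    qed
    have fin: "finite {1..n::nat}" by simp
    have jR_set: "set jR \<subseteq> {1..n}" "distinct jR" "\<forall>j\<in>set jR. p j = P1"
      using kstar by (auto simp: jR_def p_def)
    have jL_set: "set jL \<subseteq> {1..n}" "distinct jL" "\<forall>j\<in>set jL. p j = P0"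
      using kstar by (auto simp: jL_def p_def)
    have R_ch: "measure_pmf.prob M R \<le> Ch"
      unfolding Ch_def
    proof (rule inf_bound)
      show "\<forall>t\<in>{0<..<1::real}. measure_pmf.prob M R \<le> exp (real \<alpha> * ln (rho P0 P1 t))"
      proof
        fix t :: real assume t: "t \<in> {0<..<1}"
        show "measure_pmf.prob M R \<le> exp (real \<alpha> * ln (rho P0 P1 t))"
          unfolding M R_def
          by (rule chernoff_walk[where Q=P1 and t=t]) 
             (use fin jR_set rho_pos_le1[OF supp0 supp1] t exp_P1[OF supp0 supp1] in auto)
      qed
    qed (use alpha in auto)
    have L_ch: "measure_pmf.prob M L \<le> Ch"
      unfolding Ch_def
    proof (rule inf_bound)
      show "\<forall>t\<in>{0<..<1::real}. measure_pmf.prob M L \<le> exp (real \<alpha> * ln (rho P0 P1 t))"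
      proof
        fix t :: real assume t: "t \<in> {0<..<1}"
        show "measure_pmf.prob M L \<le> exp (real \<alpha> * ln (rho P0 P1 t))"
          unfolding M L_def
          by (rule chernoff_walk[where Q=P0 and t="1-t"]) 
             (use fin jL_set rho_pos_le1[OF supp0 supp1] t exp_P1[OF supp0 supp1] in auto)
      qed
    qed (use alpha in auto)
    define H1 where "H1 = exp (- (real \<alpha> * C\<^sup>2) / s\<^sup>2)"
    have R_h: "measure_pmf.prob M R \<le> H1"
    proof (cases "s = 0 \<or> KL P1 P0 = 0")
      case True
      then have "H1 = 1" using C0 KLp by (auto simp: H1_def C_def)
      then show ?thesis by simp
    next
      case False
      have "measure_pmf.prob M R \<le> exp (- (real \<alpha> * (KL P1 P0)\<^sup>2 / s\<^sup>2))"
        unfolding M R_def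
        by (rule hoeff_walk[where Q=P1 and a="- Dinf P1 P0" and b="Dinf P0 P1"])
           (use fin jR_set False KLp supp1 llr_neg_bound[OF supp0 supp1] mean_llr[OF supp0 supp1]
             in \<open>auto simp: s_def DinfJ_def sum_negf\<close>)
      also have "\<dots> \<le> H1"
      proof -
        have "C\<^sup>2 \<le> (KL P1 P0)\<^sup>2" using C0 by (intro power_mono) (auto simp: C_def)
        then have "real \<alpha> * C\<^sup>2 / s\<^sup>2 \<le> real \<alpha> * (KL P1 P0)\<^sup>2 / s\<^sup>2"
          by (intro divide_right_mono mult_left_mono) auto
        then show ?thesis by (simp add: H1_def)
      qed
      finally show ?thesis .
    qed
    have L_h: "measure_pmf.prob M L \<le> H1"
    proof (cases "s = 0 \<or> KL P0 P1 = 0")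
      case True
      then have "H1 = 1" using C0 KLp by (auto simp: H1_def C_def)
      then show ?thesis by simp
    next
      case False
      have "measure_pmf.prob M L \<le> exp (- (real \<alpha> * (KL P0 P1)\<^sup>2 / s\<^sup>2))"
        unfolding M L_def
        by (rule hoeff_walk[where Q=P0 and a="- Dinf P0 P1" and b="Dinf P1 P0"])
           (use fin jL_set False KLp supp0 llr_bounds[OF supp0 supp1] mean_llr[OF supp0 supp1]
             in \<open>auto simp: s_def DinfJ_def\<close>)
      also have "\<dots> \<le> H1"
      proof -
        have "C\<^sup>2 \<le> (KL P0 P1)\<^sup>2" using C0 by (intro power_mono) (auto simp: C_def)
        then have "real \<alpha> * C\<^sup>2 / s\<^sup>2 \<le> real \<alpha> * (KL P0 P1)\<^sup>2 / s\<^sup>2"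
          by (intro divide_right_mono mult_left_mono) auto
        then show ?thesis by (simp add: H1_def)
      qed
      finally show ?thesis .
    qed
    have istar: "1 \<le> nat \<lceil>log 2 ((real n - 1) / real \<alpha>)\<rceil>"
    proof -
      have "1 < (real n - 1) / real \<alpha>" using False alpha by simp
      then have "0 < log 2 ((real n - 1) / real \<alpha>)" by simp
      then show ?thesis by linarith
    qed
    have "H1 \<le> Sm"
    proof -
      have "H1 = (\<lambda>i. exp (- (2 ^ (i - 1) * real \<alpha> * C\<^sup>2) / s\<^sup>2)) 1" by (simp add: H1_def)
      also have "\<dots> \<le> Sm" unfolding Sm_def
        by (rule member_le_sum) (use istar in auto)
      finally show ?thesis .
    qed
    have "measure_pmf.prob M E \<le> measure_pmf.prob M (R \<union> L)"
      by (rule measure_pmf.finite_measure_mono[OF sub]) simp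
    also have "\<dots> \<le> measure_pmf.prob M R + measure_pmf.prob M L"
      by (rule measure_Un_le) auto
    also have "\<dots> \<le> 2 * min Sm Ch"
      using R_ch L_ch R_h L_h \<open>H1 \<le> Sm\<close> by simp
    finally show ?thesis unfolding M_def E_def Sm_def Ch_def C_def s_def .
  qed
qed

end
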